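(* Let $n,N\ge1$ be integers, $0<p<1$, $0<\epsilon_1,\epsilon_2<1$, and $\beta>0$ with $L=\beta n$ a positive integer, and suppose $\beta\ge\beta_{\mathsf{Th}}$ and $N\ge N_{\mathsf{Th}}$, where $$\beta_{\mathsf{Th}}=\frac{\log_{2}\left(\dfrac{N\left((1+2p-p^2)^n-1\right)}{(\epsilon_1/2^n)^{1/N}}\right)}{n\left(1-\log_2(1+2p-p^2)\right)},\qquad N_{\mathsf{Th}}=\frac{\log_2\left(\left(1+\frac{\epsilon_2}{2^{n}}\right)^{1/n}-1\right)}{\log_2(p)}.$$ Then in the random model described in the context, the expected number of data comparisons performed by the Data-driven Pruning Algorithm is at most $\mathcal{U}_0=N^2 2^n(1+2p-p^2)^n$.
   Context: Model: $M=2^n$, addresses $C=\{0,1\}^n$; each address $\mathbf{x}$ carries a strand $(\mathbf{x},\mathbf{d})$ with data $\mathbf{d}$ independent uniform on $\{0,1\}^L$. Each strand is sent $N$ times through $\mathsf{BEC}(p)$ (each symbol independently erased to $*$ with probability $p$); $\mathcal{Y}$ is the unordered multiset of all $MN$ reads $(\mathbf{y},\mathbf{d}')$. Words $\mathbf{u},\mathbf{v}\in\{0,1,*\}^\ell$ agree, $\mathbf{u}\cong\mathbf{v}$, if they coincide wherever neither is erased; reads agree if both address and data parts agree. Graph $\mathcal{G}$: bipartite, left vertices $C$, right vertices the reads, edge $\mathbf{x}$–$(\mathbf{y},\mathbf{d}')$ iff $\mathbf{x}\cong\mathbf{y}$; $E_{(\mathbf{y},\mathbf{d}')}$ is the set of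 left neighbours of a read in the current graph, and $\mathcal{N}_{(\mathbf{y},\mathbf{d}')}$ (two-hop neighbourhood) is the set of other reads sharing a left neighbour with $(\mathbf{y},\mathbf{d}')$ in the current graph. Data-driven Pruning Algorithm: Start with no read marked pruned. While fewer than $N2^n$ reads are pruned, choose a not-yet-pruned read $(\tilde{\mathbf{y}},\tilde{\mathbf{d}}')$ minimizing $|\mathcal{N}_{(\tilde{\mathbf{y}},\tilde{\mathbf{d}}')}|$ and call PRUNE on it: mark it pruned; for each read $(\mathbf{y},\mathbf{d}')\in\mathcal{N}_{(\tilde{\mathbf{y}},\tilde{\mathbf{d}}')}$ perform one data comparison, i.e. test $(\mathbf{y},\mathbf{d}')\cong(\tilde{\mathbf{y}},\tilde{\mathbf{d}}')$, and put those passing into a set $\mathcal{T}$; if $|\mathcal{T}|=N-1$, let $\mathcal{X}^*=\bigcap_{(\mathbf{y},\mathbf{d}')\in\mathcal{T}}E_{(\mathbf{y},\mathbf{d}')}$, delete every edge between a read of $\mathcal{T}$ and a left vertex outside $\mathcal{X}^*$, and mark all reads of $\mathcal{T}$ pruned. Afterwards a peeling matching procedure (which performs no data comparisons) is run on the resulting graph. The number of data comparisons is the total number of tests $(\mathbf{y},\mathbf{d}')\cong(\tilde{\mathbf{y}},\tilde{\mathbf{d}}')$ performed in all calls of PRUNE. *)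

theory Defs
  imports "HOL-Probability.Probability"
begin

type_synonym rid = "bool list \<times> nat"   (* read identity: (true address x, copy index j) *)
type_synonym rword = "bool option list \<times> bool option list"  (* (address part, data part); None = erasure * *)
type_synonym gstate = "(rid \<Rightarrow> bool list set) \<times> rid set \<times> nat"
  (* (left neighbours E of each read, set of pruned reads, number of data comparisons so far) *)
type_synonym outcome = "(bool list \<Rightarrow> bool list) \<times> (rid \<Rightarrow> nat \<Rightarrow> bool)"
  (* (data d of each address, erasure pattern of each read; True = erased) *)

definition addrs :: "nat \<Rightarrow> bool list set" where
  "addrs n = {x. length x = n}"

definition reads :: "nat \<Rightarrow> nat \<Rightarrow> rid set" where
  "reads n N = addrs n \<times> {..<N}"

definition agree :: "'a option list \<Rightarrow> 'a option list \<Rightarrow> bool" where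
  "agree u v \<longleftrightarrow> length u = length v \<and>
     (\<forall>i<length u. u ! i = None \<or> v ! i = None \<or> u ! i = v ! i)"

definition ragree :: "rword \<Rightarrow> rword \<Rightarrow> bool" where
  "ragree r s \<longleftrightarrow> agree (fst r) (fst s) \<and> agree (snd r) (snd s)"

definition read_of :: "nat \<Rightarrow> nat \<Rightarrow> outcome \<Rightarrow> rid \<Rightarrow> rword" where
  "read_of n L \<omega> r =
     (map (\<lambda>i. if snd \<omega> r i then None else Some (fst r ! i)) [0..<n],
      map (\<lambda>i. if snd \<omega> r (n + i) then None else Some (fst \<omega> (fst r) ! i)) [0..<L])"

definition outcome_pmf :: "nat \<Rightarrow> nat \<Rightarrow> nat \<Rightarrow> real \<Rightarrow> outcome pmf" where
  "outcome_pmf n N L p =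
     pair_pmf (Pi_pmf (addrs n) [] (\<lambda>_. pmf_of_set {d :: bool list. length d = L}))
              (Pi_pmf (reads n N) (\<lambda>_. False)
                  (\<lambda>_. Pi_pmf {..<n + L} False (\<lambda>_. bernoulli_pmf p)))"

definition init_graph :: "nat \<Rightarrow> (rid \<Rightarrow> rword) \<Rightarrow> rid \<Rightarrow> bool list set" where
  "init_graph n rd r = {x \<in> addrs n. agree (map Some x) (fst (rd r))}"

definition nbhd :: "rid set \<Rightarrow> (rid \<Rightarrow> bool list set) \<Rightarrow> rid \<Rightarrow> rid set" where
  "nbhd R G r = {r' \<in> R. r' \<noteq> r \<and> G r \<inter> G r' \<noteq> {}}"

definition prune :: "rid set \<Rightarrow> nat \<Rightarrow> (rid \<Rightarrow> rword) \<Rightarrow> gstate \<Rightarrow> rid \<Rightarrow> gstate" where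
  "prune R N rd s r =
     (let G = fst s; P = fst (snd s); c = snd (snd s);
          Nb = nbhd R G r;
          T = {r' \<in> Nb. ragree (rd r') (rd r)};
          P1 = insert r P;
          c1 = c + card Nb
      in if card T = N - 1
         then (let X = \<Inter> (G ` T)
               in ((\<lambda>r'. if r' \<in> T then G r' \<inter> X else G r'), P1 \<union> T, c1))
         else (G, P1, c1))"

definition valid_sel :: "rid set \<Rightarrow> (gstate \<Rightarrow> rid) \<Rightarrow> bool" where
  "valid_sel R sel \<longleftrightarrow>
     (\<forall>G P c. R - P \<noteq> {} \<longrightarrow>
        sel (G, P, c) \<in> R - P \<and>
        (\<forall>r \<in> R - P. card (nbhd R G (sel (G, P, c))) \<le> card (nbhd R G r)))"

definition alg_step :: "rid set \<Rightarrow> nat \<Rightarrow> nat \<Rightarrow> (rid \<Rightarrow> rword) \<Rightarrow> (gstate \<Rightarrow> rid) \<Rightarrow> gstate \<Rightarrow> gstate" where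
  "alg_step R N M rd sel s = (if card (fst (snd s)) < M then prune R N rd s (sel s) else s)"

text \<open>Total number of data comparisons of the Data-driven Pruning Algorithm
  (the while loop runs at most N 2^n iterations, since each iteration prunes a new read).
  The selection rule may depend on the observed reads.\<close>
definition comparisons ::
  "nat \<Rightarrow> nat \<Rightarrow> nat \<Rightarrow> ((rid \<Rightarrow> rword) \<Rightarrow> gstate \<Rightarrow> rid) \<Rightarrow> outcome \<Rightarrow> nat" where
  "comparisons n N L sel \<omega> =
     (let R = reads n N; rd = read_of n L \<omega>; M = N * 2 ^ n
      in snd (snd ((alg_step R N M rd (sel rd) ^^ M) (init_graph n rd, {}, 0))))"

end

theory Submission imports Defs begin

lemma nbhd_mono: "(\<And>r. G r \<subseteq> G0 r) \<Longrightarrow> nbhd R G r \<subseteq> nbhd R G0 r"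
  unfolding nbhd_def by blast

lemma nbhd_sub: "nbhd R G r \<subseteq> R" unfolding nbhd_def by blast

definition inv_st :: "rid set \<Rightarrow> (rid \<Rightarrow> bool list set) \<Rightarrow> gstate \<Rightarrow> bool" where
  "inv_st R G0 s \<longleftrightarrow> fst (snd s) \<subseteq> R \<and> (\<forall>r. fst s r \<subseteq> G0 r) \<and>
     snd (snd s) \<le> (\<Sum>r\<in>fst (snd s). card (nbhd R G0 r))"

lemma inv_step:
  assumes fin: "finite R" and cardR: "card R = M" and vs: "valid_sel R sel"
    and inv: "inv_st R G0 s"
  shows "inv_st R G0 (alg_step R N M rd sel s)"
proof (cases "card (fst (snd s)) < M")
  case False thus ?thesis using inv by (simp add: alg_step_def)
next
  case True
  obtain G P c where s: "s = (G, P, c)" by (cases s) auto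
  have PR: "P \<subseteq> R" and GG: "\<And>r. G r \<subseteq> G0 r" and cP: "c \<le> (\<Sum>r\<in>P. card (nbhd R G0 r))"
    using inv s by (auto simp: inv_st_def)
  have "R - P \<noteq> {}" using True s PR cardR by auto
  then have rin: "sel (G, P, c) \<in> R - P" using vs unfolding valid_sel_def by blast
  define r where "r = sel (G, P, c)"
  have rin': "r \<in> R" "r \<notin> P" using rin r_def by auto
  define Nb where "Nb = nbhd R G r"
  define T where "T = {r' \<in> Nb. ragree (rd r') (rd r)}"
  have finP: "finite P" using PR fin finite_subset by auto
  have NbR: "Nb \<subseteq> R" using nbhd_sub Nb_def by metis
  have TR: "T \<subseteq> R" using NbR T_def by auto
  have cNb: "card Nb \<le> card (nbhd R G0 r)"
    using card_mono[OF finite_subset[OF nbhd_sub fin] nbhd_mono[of G G0, OF GG]] Nb_def by simp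
  have c1: "c + card Nb \<le> (\<Sum>r\<in>insert r P. card (nbhd R G0 r))"
    using cP cNb rin' finP by simp
  have mono: "(\<Sum>r\<in>insert r P. card (nbhd R G0 r)) \<le> (\<Sum>r\<in>insert r P \<union> T. card (nbhd R G0 r))"
    by (rule sum_mono2) (use fin PR TR rin' in \<open>auto intro: finite_subset\<close>)
  have step: "alg_step R N M rd sel s = prune R N rd (G, P, c) r"
    using True s r_def by (simp add: alg_step_def)
  show ?thesis
  proof (cases "card T = N - 1")
    case True
    have "prune R N rd (G, P, c) r =
      ((\<lambda>r'. if r' \<in> T then G r' \<inter> \<Inter> (G ` T) else G r'), insert r P \<union> T, c + card Nb)"
      unfolding prune_def Let_def fst_conv snd_conv Nb_def[symmetric] T_def[symmetric] using True by simp
    moreover have Gsub: "\<forall>r'. (if r' \<in> T then G r' \<inter> \<Inter> (G ` T) else G r') \<subseteq> G0 r'"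
    proof
      fix r' show "(if r' \<in> T then G r' \<inter> \<Inter> (G ` T) else G r') \<subseteq> G0 r'"
        using GG[of r'] by auto
    qed
    ultimately show ?thesis using step c1 mono PR TR rin' unfolding inv_st_def by simp
  next
    case False
    have "prune R N rd (G, P, c) r = (G, insert r P, c + card Nb)"
      unfolding prune_def Let_def fst_conv snd_conv Nb_def[symmetric] T_def[symmetric] using False by simp
    then show ?thesis using step c1 PR rin' GG unfolding inv_st_def by auto
  qed
qed

lemma inv_iter:
  assumes "finite R" "card R = M" "valid_sel R sel" "inv_st R G0 s"
  shows "inv_st R G0 ((alg_step R N M rd sel ^^ k) s)"
  by (induction k) (use assms inv_step in auto)

lemma card_addrs: "card (addrs n) = 2 ^ n" and fin_addrs: "finite (addrs n)"
  using card_lists_length_eq[of "UNIV::bool set" n] finite_lists_length_eq[of "UNIV::bool set" n]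
  by (simp_all add: addrs_def)

lemma fin_reads: "finite (reads n N)" by (simp add: reads_def fin_addrs)
lemma card_reads: "card (reads n N) = N * 2 ^ n"
  by (simp add: reads_def card_cartesian_product card_addrs)

lemma comparisons_le:
  assumes "valid_sel (reads n N) (sel (read_of n L \<omega>))"
  shows "comparisons n N L sel \<omega> \<le>
    (\<Sum>r\<in>reads n N. card (nbhd (reads n N) (init_graph n (read_of n L \<omega>)) r))"
proof -
  let ?R = "reads n N" and ?G0 = "init_graph n (read_of n L \<omega>)"
  have "inv_st ?R ?G0 (init_graph n (read_of n L \<omega>), {}, 0)" by (simp add: inv_st_def)
  then have I: "inv_st ?R ?G0 ((alg_step ?R N (N * 2 ^ n) (read_of n L \<omega>) (sel (read_of n L \<omega>)) ^^ (N * 2 ^ n))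
        (init_graph n (read_of n L \<omega>), {}, 0))"
    by (intro inv_iter) (use assms fin_reads card_reads in auto)
  define s where "s = (alg_step ?R N (N * 2 ^ n) (read_of n L \<omega>) (sel (read_of n L \<omega>)) ^^ (N * 2 ^ n))
        (init_graph n (read_of n L \<omega>), {}, 0)"
  have "snd (snd s) \<le> (\<Sum>r\<in>fst (snd s). card (nbhd ?R ?G0 r))" "fst (snd s) \<subseteq> ?R"
    using I s_def by (auto simp: inv_st_def)
  moreover have "(\<Sum>r\<in>fst (snd s). card (nbhd ?R ?G0 r)) \<le> (\<Sum>r\<in>?R. card (nbhd ?R ?G0 r))"
    by (rule sum_mono2) (use calculation fin_reads in auto)
  ultimately show ?thesis unfolding comparisons_def Let_def s_def by linarith
qed


lemma integrable_01:
  fixes g :: "'a \<Rightarrow> real"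
  assumes "\<And>x. 0 \<le> g x" "\<And>x. g x \<le> 1"
  shows "integrable (measure_pmf M) g"
  by (rule measure_pmf.integrable_const_bound[where B=1]) (use assms in auto)

lemma expectation_01:
  fixes g :: "'a \<Rightarrow> real"
  assumes "\<And>x. 0 \<le> g x" "\<And>x. g x \<le> 1"
  shows "0 \<le> measure_pmf.expectation M g" "measure_pmf.expectation M g \<le> 1"
proof -
  show "0 \<le> measure_pmf.expectation M g" by (intro integral_nonneg_AE AE_I2) (use assms in auto)
  show "measure_pmf.expectation M g \<le> 1"
    by (rule measure_pmf.integral_le_const) (use assms integrable_01 in auto)
qed

lemma expectation_pair_pmf_01:
  fixes f :: "'a \<times> 'b \<Rightarrow> real"
  assumes f0: "\<And>x. 0 \<le> f x" and f1: "\<And>x. f x \<le> 1"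
  shows "measure_pmf.expectation (pair_pmf A B) f =
         measure_pmf.expectation A (\<lambda>a. measure_pmf.expectation B (\<lambda>b. f (a, b)))"
proof -
  have "ennreal (measure_pmf.expectation (pair_pmf A B) f) = (\<integral>\<^sup>+x. f x \<partial>pair_pmf A B)"
    by (rule nn_integral_eq_integral[symmetric]) (use assms in \<open>auto intro: integrable_01\<close>)
  also have "\<dots> = (\<integral>\<^sup>+a. \<integral>\<^sup>+b. f (a, b) \<partial>B \<partial>A)" by (rule nn_integral_pair_pmf')
  also have "\<dots> = (\<integral>\<^sup>+a. ennreal (measure_pmf.expectation B (\<lambda>b. f (a, b))) \<partial>A)"
    by (intro nn_integral_cong nn_integral_eq_integral) (use assms in \<open>auto intro: integrable_01\<close>)
  also have "\<dots> = ennreal (measure_pmf.expectation A (\<lambda>a. measure_pmf.expectation B (\<lambda>b. f (a, b))))"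
    by (intro nn_integral_eq_integral integrable_01 expectation_01 AE_I2) (use assms in auto)
  finally show ?thesis
    by (subst (asm) ennreal_inj) (auto intro!: expectation_01 assms)
qed

lemma Pi_pmf_two:
  assumes "finite R" "r \<in> R" "r' \<in> R" "r \<noteq> r'"
  shows "map_pmf (\<lambda>e. (e r, e r')) (Pi_pmf R d F) = pair_pmf (F r) (F r')"
proof -
  have R: "R = insert r (R - {r})" using assms by auto
  have "Pi_pmf R d F = map_pmf (\<lambda>(y,f). f(r:=y)) (pair_pmf (F r) (Pi_pmf (R - {r}) d F))"
    by (subst R, rule Pi_pmf_insert) (use assms in auto)
  then have "map_pmf (\<lambda>e. (e r, e r')) (Pi_pmf R d F) =
       map_pmf (apsnd (\<lambda>f. f r')) (pair_pmf (F r) (Pi_pmf (R - {r}) d F))"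
    using assms by (simp add: pmf.map_comp o_def case_prod_unfold apsnd_def map_prod_def)
  also have "\<dots> = pair_pmf (F r) (map_pmf (\<lambda>f. f r') (Pi_pmf (R - {r}) d F))"
    by (rule pair_map_pmf2[symmetric])
  also have "map_pmf (\<lambda>f. f r') (Pi_pmf (R - {r}) d F) = F r'"
    using assms by (subst Pi_pmf_component) auto
  finally show ?thesis .
qed

lemma prod_of_bool_all:
  assumes "finite I"
  shows "(\<Prod>i\<in>I. (of_bool (P i) :: real)) = of_bool (\<forall>i\<in>I. P i)"
proof (cases "\<forall>i\<in>I. P i")
  case True then show ?thesis by simp
next
  case False
  then obtain i where "i \<in> I" "\<not> P i" by auto
  then show ?thesis using assms False by (simp add: prod_zero_iff)
qed

lemma all_lt_ext: fixes n L :: nat shows "(\<forall>i<n. P i) = (\<forall>i\<in>{..<n+L}. n \<le> i \<or> P i)"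
proof
  assume H: "\<forall>i<n. P i"
  show "\<forall>i\<in>{..<n+L}. n \<le> i \<or> P i"
  proof
    fix i assume "i \<in> {..<n+L}"
    show "n \<le> i \<or> P i"
    proof (cases "i < n")
      case True with H show ?thesis by blast
    next
      case False then show ?thesis by simp
    qed
  qed
next
  assume H: "\<forall>i\<in>{..<n+L}. n \<le> i \<or> P i"
  show "\<forall>i<n. P i"
  proof (intro allI impI)
    fix i assume i: "i < n" then have "i \<in> {..<n+L}" by simp
    with H have "n \<le> i \<or> P i" by blast
    with i show "P i" by simp
  qed
qed

lemma pair_event_prob:
  fixes c :: "nat \<Rightarrow> bool" and p :: real and n L :: nat
  assumes p0: "0 \<le> p" and p1: "p \<le> 1"
  defines "Bp \<equiv> Pi_pmf {..<n + L} False (\<lambda>_. bernoulli_pmf p)"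
  shows "measure_pmf.expectation (pair_pmf Bp Bp)
           (\<lambda>ab. of_bool (\<forall>i<n. fst ab i \<or> snd ab i \<or> c i))
       = (\<Prod>i<n. if c i then 1 else 2 * p - p ^ 2)"
proof -
  let ?I = "{..<n + L}"
  have inner: "measure_pmf.expectation Bp (\<lambda>b. of_bool (\<forall>i<n. a i \<or> b i \<or> c i))
      = (\<Prod>i\<in>?I. if n \<le> i \<or> a i \<or> c i then 1 else p)" for a :: "nat \<Rightarrow> bool"
  proof -
    have "(\<lambda>b. (of_bool (\<forall>i<n. a i \<or> b i \<or> c i) :: real)) =
          (\<lambda>b. \<Prod>i\<in>?I. of_bool (n \<le> i \<or> a i \<or> b i \<or> c i))"
      by (intro ext) (simp only: prod_of_bool_all[OF finite_lessThan] all_lt_ext[where n=n and L=L])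
    note eqb = this
    have "measure_pmf.expectation Bp (\<lambda>b. (of_bool (\<forall>i<n. a i \<or> b i \<or> c i) :: real))
       = measure_pmf.expectation Bp (\<lambda>b. \<Prod>i\<in>?I. (of_bool (n \<le> i \<or> a i \<or> b i \<or> c i) :: real))"
      by (rule arg_cong[OF eqb])
    also have "\<dots> = (\<Prod>i\<in>?I. measure_pmf.expectation (bernoulli_pmf p) (\<lambda>v. of_bool (n \<le> i \<or> a i \<or> v \<or> c i)))"
      unfolding Bp_def by (rule expectation_prod_Pi_pmf) (auto intro: integrable_01)
    also have "\<dots> = (\<Prod>i\<in>?I. if n \<le> i \<or> a i \<or> c i then 1 else p)"
      using p0 p1 by (intro prod.cong) auto
    finally show ?thesis .
  qed
  have "measure_pmf.expectation (pair_pmf Bp Bp)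
           (\<lambda>ab. (of_bool (\<forall>i<n. fst ab i \<or> snd ab i \<or> c i) :: real))
     = measure_pmf.expectation Bp (\<lambda>a. measure_pmf.expectation Bp (\<lambda>b. of_bool (\<forall>i<n. a i \<or> b i \<or> c i)))"
    by (subst expectation_pair_pmf_01) auto
  also have "\<dots> = measure_pmf.expectation Bp (\<lambda>a. \<Prod>i\<in>?I. if n \<le> i \<or> a i \<or> c i then 1 else p)"
    by (simp only: inner)
  also have "\<dots> = (\<Prod>i\<in>?I. measure_pmf.expectation (bernoulli_pmf p) (\<lambda>v. if n \<le> i \<or> v \<or> c i then 1 else p))"
    unfolding Bp_def by (rule expectation_prod_Pi_pmf) (use p0 p1 in \<open>auto intro: integrable_01\<close>)
  also have "\<dots> = (\<Prod>i\<in>?I. if n \<le> i \<or> c i then 1 else 2 * p - p ^ 2)"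
    using p0 p1 by (intro prod.cong) (auto simp: power2_eq_square algebra_simps)
  also have "\<dots> = (\<Prod>i<n. if c i then 1 else 2 * p - p ^ 2)"
    by (rule prod.mono_neutral_cong_right) auto
  finally show ?thesis .
qed

lemma sum_addrs_prod:
  "(\<Sum>xs\<in>addrs n. \<Prod>i<n. g i (xs ! i)) = (\<Prod>i<n. g i True + g i False :: real)"
proof (induction n arbitrary: g)
  case 0
  have "addrs 0 = {[]}" by (auto simp: addrs_def)
  then show ?case by simp
next
  case (Suc n)
  have A: "addrs (Suc n) = (\<lambda>(b, xs). b # xs) ` (UNIV \<times> addrs n)"
    by (auto simp: addrs_def image_iff length_Suc_conv)
  have inj: "inj_on (\<lambda>(b, xs). b # xs) (UNIV \<times> addrs n)" by (auto simp: inj_on_def)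
  have finA: "finite (addrs n)"
    using finite_lists_length_eq[of "UNIV::bool set" n] by (simp add: addrs_def)
  have "(\<Sum>xs\<in>addrs (Suc n). \<Prod>i<Suc n. g i (xs ! i))
      = (\<Sum>(b, xs)\<in>UNIV \<times> addrs n. \<Prod>i<Suc n. g i ((b # xs) ! i))"
    by (subst A, subst sum.reindex[OF inj]) (simp add: case_prod_unfold)
  also have "\<dots> = (\<Sum>(b, xs)\<in>UNIV \<times> addrs n. g 0 b * (\<Prod>i<n. g (Suc i) (xs ! i)))"
    by (intro sum.cong refl) (auto simp del: prod.lessThan_Suc simp add: prod.lessThan_Suc_shift)
  also have "\<dots> = (\<Sum>b\<in>UNIV. \<Sum>xs\<in>addrs n. g 0 b * (\<Prod>i<n. g (Suc i) (xs ! i)))"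
    by (subst sum.cartesian_product) simp
  also have "\<dots> = (\<Sum>b\<in>UNIV. g 0 b * (\<Prod>i<n. g (Suc i) True + g (Suc i) False))"
    by (simp add: sum_distrib_left[symmetric] Suc.IH[of "\<lambda>i. g (Suc i)"])
  also have "\<dots> = (\<Prod>i<Suc n. g i True + g i False)"
    by (simp del: prod.lessThan_Suc add: UNIV_bool prod.lessThan_Suc_shift algebra_simps)
  finally show ?case .
qed


definition evt :: "nat \<Rightarrow> rid \<Rightarrow> rid \<Rightarrow> outcome \<Rightarrow> real" where
  "evt n r r' \<omega> = of_bool (\<forall>i<n. snd \<omega> r i \<or> snd \<omega> r' i \<or> fst r ! i = fst r' ! i)"

lemma agree_read:
  assumes "agree (map Some y) (fst (read_of n L \<omega> r))" "i < n" "\<not> snd \<omega> r i"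
  shows "y ! i = fst r ! i"
proof -
  have len: "length y = n" using assms(1) by (simp add: agree_def read_of_def)
  then have "map Some y ! i = None \<or> fst (read_of n L \<omega> r) ! i = None \<or>
             map Some y ! i = fst (read_of n L \<omega> r) ! i"
    using assms(1,2) unfolding agree_def by auto
  then show ?thesis using assms(2,3) len by (simp add: read_of_def)
qed

lemma graph_ev:
  assumes "init_graph n (read_of n L \<omega>) r \<inter> init_graph n (read_of n L \<omega>) r' \<noteq> {}"
  shows "\<forall>i<n. snd \<omega> r i \<or> snd \<omega> r' i \<or> fst r ! i = fst r' ! i"
proof -
  obtain y where y: "agree (map Some y) (fst (read_of n L \<omega> r))"
      "agree (map Some y) (fst (read_of n L \<omega> r'))"
    using assms by (auto simp: init_graph_def)
  show ?thesis using agree_read[OF y(1)] agree_read[OF y(2)] by metis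
qed

lemma card_nbhd_le:
  assumes "r \<in> reads n N"
  shows "real (card (nbhd (reads n N) (init_graph n (read_of n L \<omega>)) r))
     \<le> (\<Sum>r'\<in>reads n N - {r}. evt n r r' \<omega>)"
proof -
  let ?R = "reads n N"
  let ?Q = "\<lambda>r'. \<forall>i<n. snd \<omega> r i \<or> snd \<omega> r' i \<or> fst r ! i = fst r' ! i"
  have "nbhd ?R (init_graph n (read_of n L \<omega>)) r \<subseteq> (?R - {r}) \<inter> {r'. ?Q r'}"
    unfolding nbhd_def using graph_ev by blast
  then have "card (nbhd ?R (init_graph n (read_of n L \<omega>)) r) \<le> card ((?R - {r}) \<inter> {r'. ?Q r'})"
    by (rule card_mono[rotated]) (simp add: fin_reads)
  also have "real (card ((?R - {r}) \<inter> {r'. ?Q r'})) = (\<Sum>r'\<in>?R - {r}. evt n r r' \<omega>)"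
    unfolding evt_def by (simp add: fin_reads)
  finally show ?thesis by simp
qed

lemma evt_01: "0 \<le> evt n r r' \<omega>" "evt n r r' \<omega> \<le> 1"
  by (auto simp: evt_def)

lemma expect_evt:
  assumes p0: "0 \<le> p" and p1: "p \<le> 1"
    and r: "r \<in> reads n N" and r': "r' \<in> reads n N" and ne: "r \<noteq> r'"
  shows "measure_pmf.expectation (outcome_pmf n N L p) (evt n r r')
       = (\<Prod>i<n. if fst r ! i = fst r' ! i then 1 else 2 * p - p ^ 2)"
proof -
  define Bp where "Bp = Pi_pmf {..<n + L} False (\<lambda>_. bernoulli_pmf p)"
  define g where "g = (\<lambda>ab :: (nat \<Rightarrow> bool) \<times> (nat \<Rightarrow> bool).
     (of_bool (\<forall>i<n. fst ab i \<or> snd ab i \<or> fst r ! i = fst r' ! i) :: real))"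
  have "evt n r r' = (\<lambda>\<omega>. g (snd \<omega> r, snd \<omega> r'))"
    by (auto simp: evt_def g_def)
  then have "measure_pmf.expectation (outcome_pmf n N L p) (evt n r r')
     = measure_pmf.expectation (outcome_pmf n N L p) (\<lambda>\<omega>. g (snd \<omega> r, snd \<omega> r'))"
    by simp
  also have "\<dots> = measure_pmf.expectation (Pi_pmf (reads n N) (\<lambda>_. False) (\<lambda>_. Bp)) (\<lambda>e. g (e r, e r'))"
    unfolding outcome_pmf_def Bp_def by (rule expectation_pair_pmf_snd[where f="\<lambda>e. g (e r, e r')"])
  also have "\<dots> = measure_pmf.expectation (map_pmf (\<lambda>e. (e r, e r')) (Pi_pmf (reads n N) (\<lambda>_. False) (\<lambda>_. Bp))) g"
    by simp
  also have "map_pmf (\<lambda>e. (e r, e r')) (Pi_pmf (reads n N) (\<lambda>_. False) (\<lambda>_. Bp)) = pair_pmf Bp Bp"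
    by (rule Pi_pmf_two) (use r r' ne fin_reads in auto)
  also have "measure_pmf.expectation (pair_pmf Bp Bp) g
      = (\<Prod>i<n. if fst r ! i = fst r' ! i then 1 else 2 * p - p ^ 2)"
    unfolding g_def Bp_def by (rule pair_event_prob[OF p0 p1])
  finally show ?thesis .
qed

lemma sum_Q:
  assumes s0: "0 \<le> s"
  shows "(\<Sum>r'\<in>reads n N. (\<Prod>i<n. if x ! i = fst r' ! i then 1 else s)) = real N * (1 + s) ^ n"
proof -
  have "(\<Sum>r'\<in>reads n N. (\<Prod>i<n. if x ! i = fst r' ! i then 1 else s))
      = (\<Sum>x'\<in>addrs n. \<Sum>j\<in>{..<N}. (\<Prod>i<n. if x ! i = x' ! i then 1 else s))"
    unfolding reads_def by (subst sum.cartesian_product) (simp add: case_prod_unfold)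
  also have "\<dots> = real N * (\<Sum>x'\<in>addrs n. (\<Prod>i<n. if x ! i = x' ! i then 1 else s))"
    by (simp add: sum_distrib_left)
  also have "(\<Sum>x'\<in>addrs n. (\<Prod>i<n. if x ! i = x' ! i then 1 else s))
      = (\<Prod>i<n. (if x ! i = True then 1 else s) + (if x ! i = False then 1 else s))"
    by (rule sum_addrs_prod)
  also have "\<dots> = (\<Prod>i<n. 1 + s)"
    by (intro prod.cong refl) auto
  finally show ?thesis by simp
qed


theorem lemma6:
  fixes n N L :: nat and p \<epsilon>1 \<epsilon>2 \<beta> :: real
    and sel :: "(rid \<Rightarrow> rword) \<Rightarrow> gstate \<Rightarrow> rid"
  assumes "n \<ge> 1" and "N \<ge> 1"
    and "0 < p" and "p < 1"
    and "0 < \<epsilon>1" and "\<epsilon>1 < 1" and "0 < \<epsilon>2" and "\<epsilon>2 < 1"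
    and "\<beta> > 0" and "L > 0" and "real L = \<beta> * real n"
    and "\<beta> \<ge> log 2 (real N * ((1 + 2 * p - p ^ 2) ^ n - 1) / (\<epsilon>1 / 2 ^ n) powr (1 / real N))
              / (real n * (1 - log 2 (1 + 2 * p - p ^ 2)))"
    and "real N \<ge> log 2 ((1 + \<epsilon>2 / 2 ^ n) powr (1 / real n) - 1) / log 2 p"
    and "\<forall>rd. valid_sel (reads n N) (sel rd)"
  shows "measure_pmf.expectation (outcome_pmf n N L p) (\<lambda>\<omega>. real (comparisons n N L sel \<omega>))
           \<le> real N ^ 2 * 2 ^ n * (1 + 2 * p - p ^ 2) ^ n"
proof -
  let ?R = "reads n N" and ?M = "outcome_pmf n N L p"
  define s where "s = 2 * p - p ^ 2"
  have p0: "0 \<le> p" and p1: "p \<le> 1" using assms(3,4) by auto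
  have "s = p * (2 - p)" unfolding s_def by (simp add: power2_eq_square algebra_simps)
  then have s0: "0 \<le> s" using p0 p1 by simp
  have vs: "\<And>\<omega>. valid_sel ?R (sel (read_of n L \<omega>))" using assms(14) by blast
  have bound: "real (comparisons n N L sel \<omega>) \<le> (\<Sum>r\<in>?R. \<Sum>r'\<in>?R - {r}. evt n r r' \<omega>)" for \<omega>
  proof -
    have "real (comparisons n N L sel \<omega>)
        \<le> real (\<Sum>r\<in>?R. card (nbhd ?R (init_graph n (read_of n L \<omega>)) r))"
      using comparisons_le[where n=n and N=N and sel=sel and L=L and \<omega>=\<omega>, OF vs] by linarith
    also have "\<dots> = (\<Sum>r\<in>?R. real (card (nbhd ?R (init_graph n (read_of n L \<omega>)) r)))" by simp
    also have "\<dots> \<le> (\<Sum>r\<in>?R. \<Sum>r'\<in>?R - {r}. evt n r r' \<omega>)"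
      by (intro sum_mono card_nbhd_le)
    finally show ?thesis .
  qed
  have bound2: "real (comparisons n N L sel \<omega>) \<le> real (card ?R * card ?R)" for \<omega>
  proof -
    have "comparisons n N L sel \<omega> \<le> (\<Sum>r\<in>?R. card (nbhd ?R (init_graph n (read_of n L \<omega>)) r))"
      using comparisons_le[where n=n and N=N and sel=sel and L=L and \<omega>=\<omega>, OF vs] .
    also have "\<dots> \<le> (\<Sum>r\<in>?R. card ?R)"
      by (intro sum_mono card_mono fin_reads nbhd_sub)
    finally have "comparisons n N L sel \<omega> \<le> card ?R * card ?R" by simp
    then show ?thesis by (simp only: of_nat_le_iff)
  qed
  have intE: "integrable ?M (evt n r r')" for r r'
    by (rule integrable_01) (auto simp: evt_01)
  have intC: "integrable ?M (\<lambda>\<omega>. real (comparisons n N L sel \<omega>))"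
    by (rule measure_pmf.integrable_const_bound[where B="real (card ?R * card ?R)"])
       (use bound2 in auto)
  have "measure_pmf.expectation ?M (\<lambda>\<omega>. real (comparisons n N L sel \<omega>))
      \<le> measure_pmf.expectation ?M (\<lambda>\<omega>. \<Sum>r\<in>?R. \<Sum>r'\<in>?R - {r}. evt n r r' \<omega>)"
    by (rule integral_mono[OF intC _ bound]) (intro Bochner_Integration.integrable_sum intE)
  also have "\<dots> = (\<Sum>r\<in>?R. \<Sum>r'\<in>?R - {r}. measure_pmf.expectation ?M (evt n r r'))"
    by (simp add: Bochner_Integration.integral_sum Bochner_Integration.integrable_sum intE)
  also have "\<dots> = (\<Sum>r\<in>?R. \<Sum>r'\<in>?R - {r}. (\<Prod>i<n. if fst r ! i = fst r' ! i then 1 else s))"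
    unfolding s_def by (intro sum.cong refl expect_evt p0 p1) auto
  also have "\<dots> \<le> (\<Sum>r\<in>?R. \<Sum>r'\<in>?R. (\<Prod>i<n. if fst r ! i = fst r' ! i then 1 else s))"
    by (intro sum_mono sum_mono2 fin_reads prod_nonneg) (use s0 in auto)
  also have "\<dots> = (\<Sum>r\<in>?R. real N * (1 + s) ^ n)"
    by (intro sum.cong refl sum_Q s0)
  also have "\<dots> = real N ^ 2 * 2 ^ n * (1 + 2 * p - p ^ 2) ^ n"
    by (simp add: card_reads s_def power2_eq_square algebra_simps)
  finally show ?thesis .
qed

end
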